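(* Let $(X,d)$ be a compact metric space without isolated points and let $f_{1,\infty}=\{f_n\}$ be a sequence of continuous maps $f_n:X\to X$ converging uniformly to $f$. If $(X,f_{1,\infty})$ is multi-transitive and the set of periodic points of $f_{1,\infty}$ is dense in $X$, then $(X,f_{1,\infty})$ is $\mathcal{N}$-sensitive.
   Context: Write $f_i^n=f_{n+i-1}\circ\cdots\circ f_i$, $f_i^0=\mathrm{id}$. A point $x$ is periodic for $f_{1,\infty}$ if there is $N\in\mathbb{N}$ with $f_1^{nN}(x)=x$ for every $n\in\mathbb{N}$. The system is multi-transitive if for every $m\in\mathbb{N}$ and all nonempty open $U_1,\dots,U_m,V_1,\dots,V_m\subseteq X$ there is $k\in\mathbb{N}$ with $f_1^{ik}(U_i)\cap V_i\ne\varnothing$ for each $i=1,\dots,m$. $f_{1,\infty}^{[k]}=\{f^k_{k(n-1)+1}\}_{n=1}^\infty$ (its $n$-fold composition from index $1$ is $f_1^{kn}$), and $N_{f_{1,\infty}}(V,\delta)=\{n\in\mathbb{N}:\exists u,v\in V,\ d(f_1^n(u),f_1^n(v))>\delta\}$. The system is $\mathcal{N}$-sensitive if for every $r\in\mathbb{N}$ there is $\delta>0$ such that $\bigcap_{i=1}^r N_{f_{1,\infty}^{[i]}}(U_i,\delta)\ne\varnothing$ for all nonempty open $U_1,\dots,U_r\subseteq X$. *)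

theory Defs
  imports "HOL-Analysis.Analysis"
begin

text \<open>Non-autonomous system f_{1,infinity}: the maps are f 1, f 2, ... (f 0 is ignored).
  ncomp f i n = f_(n+i-1) o ... o f_i, with ncomp f i 0 = id.\<close>
fun ncomp :: "(nat \<Rightarrow> 'a \<Rightarrow> 'a) \<Rightarrow> nat \<Rightarrow> nat \<Rightarrow> 'a \<Rightarrow> 'a" where
  "ncomp f i 0 = id"
| "ncomp f i (Suc n) = f (i + n) \<circ> ncomp f i n"

definition periodic_pt :: "(nat \<Rightarrow> 'a \<Rightarrow> 'a) \<Rightarrow> 'a \<Rightarrow> bool" where
  "periodic_pt f x \<longleftrightarrow> (\<exists>N\<ge>1. \<forall>n\<ge>1. ncomp f 1 (n * N) x = x)"

definition multi_transitive :: "(nat \<Rightarrow> 'a::topological_space \<Rightarrow> 'a) \<Rightarrow> bool" where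
  "multi_transitive f \<longleftrightarrow>
     (\<forall>m\<ge>1. \<forall>U V :: nat \<Rightarrow> 'a set.
        (\<forall>i\<in>{1..m}. open (U i) \<and> U i \<noteq> {} \<and> open (V i) \<and> V i \<noteq> {}) \<longrightarrow>
        (\<exists>k\<ge>1. \<forall>i\<in>{1..m}. ncomp f 1 (i * k) ` (U i) \<inter> V i \<noteq> {}))"

definition block_sys :: "(nat \<Rightarrow> 'a \<Rightarrow> 'a) \<Rightarrow> nat \<Rightarrow> nat \<Rightarrow> 'a \<Rightarrow> 'a" where
  "block_sys f k n = ncomp f (k * (n - 1) + 1) k"

definition sens_times :: "(nat \<Rightarrow> 'a::metric_space \<Rightarrow> 'a) \<Rightarrow> 'a set \<Rightarrow> real \<Rightarrow> nat set" where
  "sens_times f V \<delta> = {n. n \<ge> 1 \<and> (\<exists>u\<in>V. \<exists>v\<in>V. dist (ncomp f 1 n u) (ncomp f 1 n v) > \<delta>)}"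

definition N_sensitive :: "(nat \<Rightarrow> 'a::metric_space \<Rightarrow> 'a) \<Rightarrow> bool" where
  "N_sensitive f \<longleftrightarrow>
     (\<forall>r\<ge>1. \<exists>\<delta>>0. \<forall>U :: nat \<Rightarrow> 'a set.
        (\<forall>i\<in>{1..r}. open (U i) \<and> U i \<noteq> {}) \<longrightarrow>
        (\<Inter>i\<in>{1..r}. sens_times (block_sys f i) (U i) \<delta>) \<noteq> {})"

end

theory Submission
  imports Defs
begin

lemma ncomp_add: "ncomp f a (m + n) = ncomp f (a + m) n \<circ> ncomp f a m"
  by (induction n) (auto simp: add_ac)

lemma ncomp_block: "ncomp (block_sys f i) 1 n = ncomp f 1 (i * n)"
proof (induction n)
  case 0 then show ?case by simp
next
  case (Suc n)
  have "ncomp f 1 (i * Suc n) = ncomp f 1 (i * n + i)" by (simp add: add_ac)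
  also have "\<dots> = ncomp f (1 + i * n) i \<circ> ncomp f 1 (i * n)" by (rule ncomp_add)
  finally show ?case using Suc by (simp add: block_sys_def add_ac)
qed

theorem mainTheorem9:
  fixes f :: "nat \<Rightarrow> 'a::metric_space \<Rightarrow> 'a" and g :: "'a \<Rightarrow> 'a"
  assumes "compact (UNIV :: 'a set)"
    and "\<forall>x::'a. x islimpt UNIV"
    and "\<forall>n\<ge>1. continuous_on UNIV (f n)"
    and "uniform_limit UNIV f g sequentially"
    and "multi_transitive f"
    and "closure {x. periodic_pt f x} = UNIV"
  shows "N_sensitive f"
proof -
  obtain a :: 'a where True by blast
  from assms(2) have "a islimpt UNIV" by blast
  then obtain b where "b \<noteq> a" using islimpt_approachable[of a UNIV] zero_less_one by blast
  define \<delta> where "\<delta> = dist a b / 4"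
  have dpos: "\<delta> > 0" using \<open>b \<noteq> a\<close> by (simp add: \<delta>_def)
  have key: "\<exists>c. \<forall>y\<in>ball c \<delta>. dist y p > \<delta>" for p :: 'a
  proof -
    have tri: "dist a b \<le> dist p a + dist p b" using dist_triangle2[of a b p] by (simp add: dist_commute)
    have tri2: "dist p q \<le> dist y p + dist y q" for y q :: 'a using dist_triangle2[of p q y] by (simp add: dist_commute)
    show ?thesis
    proof (cases "dist p a \<ge> 2 * \<delta>")
      case True
      show ?thesis
      proof (intro exI[of _ a] ballI)
        fix y assume "y \<in> ball a \<delta>"
        then have "dist y a < \<delta>" by (simp add: dist_commute)
        with tri2[of a y] True show "dist y p > \<delta>" by (simp add: dist_commute)
      qed
    next
      case False
      then have "dist p b \<ge> 2 * \<delta>" using tri by (simp add: \<delta>_def)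
      show ?thesis
      proof (intro exI[of _ b] ballI)
        fix y assume "y \<in> ball b \<delta>"
        then have "dist y b < \<delta>" by (simp add: dist_commute)
        with tri2[of b y] \<open>dist p b \<ge> 2 * \<delta>\<close> show "dist y p > \<delta>" by (simp add: dist_commute)
      qed
    qed
  qed
  show ?thesis unfolding N_sensitive_def
  proof (intro allI impI exI[of _ \<delta>] conjI dpos)
    fix r :: nat and U :: "nat \<Rightarrow> 'a set"
    assume r: "r \<ge> 1" and U: "\<forall>i\<in>{1..r}. open (U i) \<and> U i \<noteq> {}"
    have "\<exists>p. p \<in> U i \<and> periodic_pt f p" if "i \<in> {1..r}" for i
    proof -
      have "U i \<inter> closure {x. periodic_pt f x} \<noteq> {}" using U that assms(6) by auto
      then have "U i \<inter> {x. periodic_pt f x} \<noteq> {}"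
        using open_Int_closure_eq_empty U that by blast
      then show ?thesis by blast
    qed
    then obtain p where p: "\<forall>i\<in>{1..r}. p i \<in> U i \<and> periodic_pt f (p i)" by metis
    then have "\<forall>i\<in>{1..r}. \<exists>N\<ge>1. \<forall>n\<ge>1. ncomp f 1 (n * N) (p i) = p i"
      by (auto simp: periodic_pt_def)
    then obtain Np where Np: "\<forall>i\<in>{1..r}. Np i \<ge> 1 \<and> (\<forall>n\<ge>1. ncomp f 1 (n * Np i) (p i) = p i)"
      by metis
    obtain c where c: "\<forall>i. \<forall>y\<in>ball (c i) \<delta>. dist y (p i) > \<delta>" using key[of "p _"] by metis
    define N where "N = (\<Prod>i\<in>{1..r}. Np i)"
    have N1: "N \<ge> 1" unfolding N_def
    proof -
      have "0 < (\<Prod>i\<in>{1..r}. Np i)" using Np by (intro prod_pos) fastforce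
      then show "1 \<le> (\<Prod>i\<in>{1..r}. Np i)" by linarith
    qed
    have Ndvd: "Np i dvd N" if "i \<in> {1..r}" for i
      unfolding N_def using that by (intro dvd_prodI) auto
    define U' where "U' j = (if N dvd j then U (j div N) else UNIV)" for j
    define V' where "V' j = (if N dvd j then ball (c (j div N)) \<delta> else UNIV)" for j
    have "\<forall>j\<in>{1..r*N}. open (U' j) \<and> U' j \<noteq> {} \<and> open (V' j) \<and> V' j \<noteq> {}"
    proof
      fix j assume j: "j \<in> {1..r*N}"
      show "open (U' j) \<and> U' j \<noteq> {} \<and> open (V' j) \<and> V' j \<noteq> {}"
      proof (cases "N dvd j")
        case True
        then obtain t where t: "j = N * t" by blast
        then have "t \<in> {1..r}" using j N1 by (auto simp: mult.commute)
        then show ?thesis using U dpos True t N1 by (auto simp: U'_def V'_def)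
      qed (auto simp: U'_def V'_def)
    qed
    moreover have "r * N \<ge> 1" using r N1 by simp
    ultimately obtain k where k: "k \<ge> 1"
      and kk: "\<forall>j\<in>{1..r*N}. ncomp f 1 (j * k) ` (U' j) \<inter> V' j \<noteq> {}"
      using assms(5) unfolding multi_transitive_def by blast
    show "(\<Inter>i\<in>{1..r}. sens_times (block_sys f i) (U i) \<delta>) \<noteq> {}"
    proof -
      have "N * k \<in> sens_times (block_sys f i) (U i) \<delta>" if i: "i \<in> {1..r}" for i
      proof -
        have "i * N \<in> {1..r*N}" using i N1 by auto
        then have "ncomp f 1 ((i * N) * k) ` (U' (i * N)) \<inter> V' (i * N) \<noteq> {}"
          using kk by blast
        moreover have "U' (i * N) = U i" "V' (i * N) = ball (c i) \<delta>"
          using N1 by (auto simp: U'_def V'_def)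
        ultimately have "ncomp f 1 (i * N * k) ` (U i) \<inter> ball (c i) \<delta> \<noteq> {}"
          by simp
        then obtain u where u: "u \<in> U i" "ncomp f 1 (i * N * k) u \<in> ball (c i) \<delta>" by blast
        obtain q where q: "N = Np i * q" using Ndvd[OF i] by blast
        have q1: "q \<ge> 1" using q N1 by (cases q) auto
        have "ncomp f 1 (i * N * k) (p i) = ncomp f 1 ((i * q * k) * Np i) (p i)"
          by (simp add: q mult_ac)
        also have "\<dots> = p i"
        proof -
          have "i * q * k \<ge> 1" using i q1 k by simp
          then show ?thesis using Np i by blast
        qed
        finally have pp: "ncomp f 1 (i * N * k) (p i) = p i" .
        have "dist (ncomp f 1 (i * N * k) u) (ncomp f 1 (i * N * k) (p i)) > \<delta>"
          using c u(2) pp by auto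
        moreover have "p i \<in> U i" using p i by blast
        moreover have "N * k \<ge> 1" using N1 k by simp
        moreover have eq: "i * (N * k) = i * N * k" by simp
        ultimately show ?thesis using u(1)
          unfolding sens_times_def ncomp_block
          by (intro CollectI conjI bexI[of _ u] bexI[of _ "p i"]) (simp_all only: eq)
      qed
      then show ?thesis using r by blast
    qed
  qed
qed

end
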